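(* $\displaystyle\lim_{\alpha\to+\infty}\tilde\theta_\alpha=\frac\pi4.$
   Context: For $\alpha>0$ and $\theta\in\mathbb{R}$ set $C_{\alpha,\theta}=\frac{\sin(2\theta)}{2\alpha}$ and $P_{\alpha,\theta}(x)=\alpha^2+\cos(2\theta)x^2-C_{\alpha,\theta}^2x^4$. Let $\theta^+_\alpha=\pi/2$ if $\alpha>1$, and $\theta^+_\alpha=\frac12\arccos(1-2\alpha^2)$ if $\alpha\le1$. Define $$L(\alpha,\theta)=\int_{-1}^1\frac{2\alpha C_{\alpha,\theta}^2x^2-\alpha\cos(2\theta)+C_{\alpha,\theta}^2x^2\sqrt{P_{\alpha,\theta}(x)}}{\sqrt{(1-x^2)P_{\alpha,\theta}(x)}\,\big(\alpha+\sqrt{P_{\alpha,\theta}(x)}\big)}\,dx.$$ For each $\alpha>0$, $\tilde\theta_\alpha$ denotes the unique $\theta\in(0,\theta^+_\alpha)\cap(0,\pi/4)$ with $L(\alpha,\theta)=0$. *)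

theory Defs
  imports "HOL-Analysis.Analysis"
begin

definition C_coef :: "real \<Rightarrow> real \<Rightarrow> real" where
  "C_coef \<alpha> \<theta> = sin (2 * \<theta>) / (2 * \<alpha>)"

definition P_poly :: "real \<Rightarrow> real \<Rightarrow> real \<Rightarrow> real" where
  "P_poly \<alpha> \<theta> x = \<alpha>\<^sup>2 + cos (2 * \<theta>) * x\<^sup>2 - (C_coef \<alpha> \<theta>)\<^sup>2 * x ^ 4"

definition theta_plus :: "real \<Rightarrow> real" where
  "theta_plus \<alpha> = (if \<alpha> > 1 then pi / 2 else arccos (1 - 2 * \<alpha>\<^sup>2) / 2)"

definition L_fun :: "real \<Rightarrow> real \<Rightarrow> real" where
  "L_fun \<alpha> \<theta> = integral {-1..1} (\<lambda>x.
     (2 * \<alpha> * (C_coef \<alpha> \<theta>)\<^sup>2 * x\<^sup>2 - \<alpha> * cos (2 * \<theta>)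
        + (C_coef \<alpha> \<theta>)\<^sup>2 * x\<^sup>2 * sqrt (P_poly \<alpha> \<theta> x))
     / (sqrt ((1 - x\<^sup>2) * P_poly \<alpha> \<theta> x) * (\<alpha> + sqrt (P_poly \<alpha> \<theta> x))))"

definition theta_tilde :: "real \<Rightarrow> real" where
  "theta_tilde \<alpha> = (THE \<theta>. \<theta> \<in> {0<..<theta_plus \<alpha>} \<inter> {0<..<pi/4} \<and> L_fun \<alpha> \<theta> = 0)"

end

theory Submission
  imports Defs
begin


definition S2 :: "real \<Rightarrow> real \<Rightarrow> real" where "S2 a c = (1 - c\<^sup>2) / (4 * a\<^sup>2)"
definition Pc :: "real \<Rightarrow> real \<Rightarrow> real \<Rightarrow> real" where
  "Pc a c y = a\<^sup>2 + c * y - S2 a c * y\<^sup>2"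
definition Gc :: "real \<Rightarrow> real \<Rightarrow> real \<Rightarrow> real" where
  "Gc a c x = (2 * a * S2 a c * x\<^sup>2 - a * c + S2 a c * x\<^sup>2 * sqrt (Pc a c (x\<^sup>2)))
     / (sqrt (Pc a c (x\<^sup>2)) * (a + sqrt (Pc a c (x\<^sup>2))))"

lemma S2_bounds: "a \<ge> 3 \<Longrightarrow> 0 \<le> c \<Longrightarrow> c \<le> 1 \<Longrightarrow> 0 \<le> S2 a c \<and> S2 a c \<le> 1 / (4*a\<^sup>2)"
  unfolding S2_def by (auto simp: divide_right_mono power_le_one)

lemma Pc_bounds:
  assumes "a \<ge> 3" "0 \<le> c" "c \<le> 1" "0 \<le> y" "y \<le> 1"
  shows "a\<^sup>2/4 \<le> Pc a c y \<and> Pc a c y \<le> (a+1)\<^sup>2"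
proof -
  have s: "0 \<le> S2 a c" "S2 a c \<le> 1/(4*a\<^sup>2)" using S2_bounds assms by auto
  have "1 \<le> a\<^sup>2" using assms by (simp add: one_le_power)
  then have "1/(4*a\<^sup>2) \<le> 1" by (simp add: divide_le_eq)
  have y2: "y\<^sup>2 \<le> 1" "0 \<le> y\<^sup>2" using assms by (auto simp: power_le_one)
  have "S2 a c * y\<^sup>2 \<le> 1" using s y2 \<open>1/(4*a\<^sup>2) \<le> 1\<close> by (meson mult_le_one order_trans)
  moreover have "0 \<le> S2 a c * y\<^sup>2" using s y2 by simp
  moreover have "c*y \<le> 1" "0 \<le> c*y" using assms by (auto simp: mult_le_one)
  moreover have "9 \<le> a*a" using assms mult_mono[of 3 a 3 a] by simp
  moreover have "(a+1)\<^sup>2 = a*a + 2*a + 1" "a\<^sup>2 = a*a" by (simp_all add: power2_eq_square algebra_simps)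
  ultimately show ?thesis unfolding Pc_def using assms by (simp only:) linarith
qed

lemma sqrtPc_bounds:
  assumes "a \<ge> 3" "0 \<le> c" "c \<le> 1" "0 \<le> y" "y \<le> 1"
  shows "a/2 \<le> sqrt (Pc a c y) \<and> sqrt (Pc a c y) \<le> a+1"
proof -
  from Pc_bounds[OF assms] have "a\<^sup>2/4 \<le> Pc a c y" "Pc a c y \<le> (a+1)\<^sup>2" by auto
  have "a/2 \<le> sqrt (Pc a c y)" by (rule real_le_rsqrt) (use \<open>a\<^sup>2/4 \<le> _\<close> in \<open>simp add: power_divide\<close>)
  moreover have "sqrt (Pc a c y) \<le> a+1" by (rule real_le_lsqrt) (use assms \<open>Pc a c y \<le> _\<close> in auto)
  ultimately show ?thesis by simp
qed

lemma core_ineq: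
  fixes a c1 c2 u1 u2 :: real
  assumes "a \<ge> 3" "0 \<le> c1" "c1 < c2" "c2 \<le> 1" "a/2 \<le> u1" "u1 \<le> u2"
    "(u2-u1)*(u1+u2) \<le> 3*(c2-c1)"
  shows "c1 * (u2*(a+u2)) < c2 * (u1*(a+u1))"
proof -
  have e: "c2 * (u1*(a+u1)) - c1 * (u2*(a+u2)) = (c2-c1)*(u1*(a+u1)) - c1*((u2-u1)*(a+u1+u2))"
    by (simp add: algebra_simps)
  have "(u2-u1)*(a+u1+u2) \<le> (u2-u1)*(2*(u1+u2))"
    using assms by (intro mult_left_mono) auto
  also have "\<dots> = 2*((u2-u1)*(u1+u2))" by (simp add: algebra_simps)
  also have "\<dots> \<le> 6*(c2-c1)" using assms by simp
  finally have h1: "(u2-u1)*(a+u1+u2) \<le> 6*(c2-c1)" .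
  have "c1*((u2-u1)*(a+u1+u2)) \<le> 1*((u2-u1)*(a+u1+u2))"
    using assms by (intro mult_right_mono) auto
  with h1 have h2: "c1*((u2-u1)*(a+u1+u2)) \<le> 6*(c2-c1)" by simp
  have "(3/2) * (9/2) \<le> u1*(a+u1)" using assms by (intro mult_mono) auto
  then have "(c2-c1) * (27/4) \<le> (c2-c1)*(u1*(a+u1))" using assms by (intro mult_left_mono) auto
  moreover have "(c2-c1)*(27/4) > 6*(c2-c1)" using assms by simp
  ultimately have "c2 * (u1*(a+u1)) - c1 * (u2*(a+u2)) > 0" unfolding e using h2
    by (smt (verit))
  then show ?thesis by simp
qed

lemma Gc_alt:
  assumes "a \<ge> 3" "0 \<le> c" "c \<le> 1" "x\<^sup>2 \<le> 1"
  shows "Gc a c x = S2 a c * x\<^sup>2 * (1 / sqrt (Pc a c (x\<^sup>2)) + a / (sqrt (Pc a c (x\<^sup>2)) * (a + sqrt (Pc a c (x\<^sup>2)))))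
     - a * c / (sqrt (Pc a c (x\<^sup>2)) * (a + sqrt (Pc a c (x\<^sup>2))))"
proof -
  define u where "u = sqrt (Pc a c (x\<^sup>2))"
  have "a/2 \<le> u" using sqrtPc_bounds[of a c "x\<^sup>2"] assms by (auto simp: u_def)
  then have "u > 0" "a + u > 0" using assms by auto
  then have "u * (a+u) \<noteq> 0" "u \<noteq> 0" by auto
  have 1: "1/u + a/(u*(a+u)) = (2*a+u)/(u*(a+u))"
    using \<open>u > 0\<close> \<open>a+u > 0\<close> by (simp add: divide_simps)
  have "S2 a c * x\<^sup>2 * ((2*a+u)/(u*(a+u))) - a*c/(u*(a+u)) = (S2 a c * x\<^sup>2 * (2*a+u) - a*c)/(u*(a+u))"
    by (simp add: diff_divide_distrib)
  also have "\<dots> = (2 * a * S2 a c * x\<^sup>2 - a * c + S2 a c * x\<^sup>2 * u) / (u * (a + u))"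
    by (simp add: algebra_simps)
  finally show ?thesis unfolding Gc_def u_def[symmetric] 1 by simp
qed

lemma Gc_mono:
  assumes "a \<ge> 3" "0 \<le> c1" "c1 < c2" "c2 \<le> 1" "x\<^sup>2 \<le> 1"
  shows "Gc a c2 x < Gc a c1 x"
proof -
  define y where "y = x\<^sup>2"
  have y: "0 \<le> y" "y \<le> 1" using assms by (auto simp: y_def)
  define u1 where "u1 = sqrt (Pc a c1 y)"
  define u2 where "u2 = sqrt (Pc a c2 y)"
  have b1: "a/2 \<le> u1" using sqrtPc_bounds[of a c1 y] assms y by (auto simp: u1_def)
  have b2: "a/2 \<le> u2" using sqrtPc_bounds[of a c2 y] assms y by (auto simp: u2_def)
  have sq: "c1\<^sup>2 \<le> c2\<^sup>2" using assms by (intro power_mono) auto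
  have S: "S2 a c2 \<le> S2 a c1" unfolding S2_def using sq by (intro divide_right_mono) auto
  have S0: "0 \<le> S2 a c2" using S2_bounds[of a c2] assms by auto
  have "S2 a c1 - S2 a c2 = (c2\<^sup>2 - c1\<^sup>2) / (4*a\<^sup>2)" unfolding S2_def by (simp add: diff_divide_distrib)
  also have "\<dots> \<le> (c2\<^sup>2 - c1\<^sup>2)"
  proof -
    have "3\<^sup>2 \<le> a\<^sup>2" using assms by (intro power_mono) auto
    then have "1 \<le> 4*a\<^sup>2" by simp
    then have "(c2\<^sup>2 - c1\<^sup>2) * 1 \<le> (c2\<^sup>2 - c1\<^sup>2) * (4*a\<^sup>2)" using sq by (intro mult_left_mono) auto
    then show ?thesis using assms by (simp add: divide_le_eq)
  qed
  also have "\<dots> = (c2-c1)*(c2+c1)" by (simp add: power2_eq_square algebra_simps)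
  also have "\<dots> \<le> (c2-c1)*2" using assms by (intro mult_left_mono) auto
  finally have Sd: "S2 a c1 - S2 a c2 \<le> 2*(c2-c1)" by simp
  have "Pc a c2 y - Pc a c1 y = (c2-c1)*y + (S2 a c1 - S2 a c2)*y\<^sup>2"
    unfolding Pc_def by (simp add: algebra_simps)
  also have "\<dots> \<le> (c2-c1)*1 + (2*(c2-c1))*1"
    using y assms Sd S by (intro add_mono mult_mono) (auto simp: power_le_one)
  finally have Pd: "Pc a c2 y - Pc a c1 y \<le> 3*(c2-c1)" by simp
  have Pm: "Pc a c1 y \<le> Pc a c2 y"
    unfolding Pc_def using S y assms by (auto intro!: add_mono diff_mono mult_right_mono mult_left_mono)
  have "0 \<le> a\<^sup>2/4" by simp
  then have P1: "0 \<le> Pc a c1 y" "0 \<le> Pc a c2 y"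
    using Pc_bounds[of a c1 y] Pc_bounds[of a c2 y] y assms by linarith+
  have u12: "u1 \<le> u2" unfolding u1_def u2_def using Pm by simp
  have "(u2-u1)*(u1+u2) = u2\<^sup>2 - u1\<^sup>2" by (simp add: power2_eq_square algebra_simps)
  also have "\<dots> = Pc a c2 y - Pc a c1 y" using P1 by (simp add: u1_def u2_def)
  finally have ud: "(u2-u1)*(u1+u2) \<le> 3*(c2-c1)" using Pd by simp
  have core: "c1 * (u2*(a+u2)) < c2 * (u1*(a+u1))"
    by (rule core_ineq) (use assms b1 u12 ud in auto)
  have pos: "0 < u1*(a+u1)" "0 < u2*(a+u2)" using b1 b2 assms by auto
  have psi: "a*c1/(u1*(a+u1)) < a*c2/(u2*(a+u2))"
    using core pos assms by (simp add: divide_simps)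
  have phi: "1/u2 + a/(u2*(a+u2)) \<le> 1/u1 + a/(u1*(a+u1))"
    using b1 b2 u12 assms by (intro add_mono divide_left_mono mult_mono) auto
  have phi0: "0 \<le> 1/u2 + a/(u2*(a+u2))" using b2 assms by auto
  have T: "S2 a c2 * y * (1/u2 + a/(u2*(a+u2))) \<le> S2 a c1 * y * (1/u1 + a/(u1*(a+u1)))"
    using S S0 y phi phi0 by (intro mult_mono) auto
  show ?thesis
    using Gc_alt[of a c1 x] Gc_alt[of a c2 x] assms T psi
    unfolding u1_def u2_def y_def by simp
qed
lemma Pc_cont: "a \<noteq> 0 \<Longrightarrow> continuous_on S (\<lambda>p. Pc a (fst p) ((sin (snd p))\<^sup>2))"
  unfolding Pc_def S2_def by (intro continuous_intros) auto

lemma S2_cont: "a \<noteq> 0 \<Longrightarrow> continuous_on S (\<lambda>p. S2 a (fst p))"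
  unfolding S2_def by (intro continuous_intros) auto

lemma Pc_pos: "a \<ge> 3 \<Longrightarrow> 0 \<le> c \<Longrightarrow> c \<le> 1 \<Longrightarrow> 0 \<le> y \<Longrightarrow> y \<le> 1 \<Longrightarrow> 0 < Pc a c y"
  using Pc_bounds[of a c y] by (smt (verit) zero_less_power2 divide_pos_pos)

lemma Gc_cont:
  assumes "a \<ge> 3"
  shows "continuous_on ({0..1} \<times> {-(pi/2)..pi/2}) (\<lambda>(c,t). Gc a c (sin t))"
proof -
  have ne: "sqrt (Pc a (fst p) ((sin (snd p))\<^sup>2)) * (a + sqrt (Pc a (fst p) ((sin (snd p))\<^sup>2))) \<noteq> 0"
    if "p \<in> {0..1} \<times> {-(pi/2)..pi/2}" for p
  proof -
    have "a/2 \<le> sqrt (Pc a (fst p) ((sin (snd p))\<^sup>2))"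
      using sqrtPc_bounds[of a "fst p" "(sin (snd p))\<^sup>2"] that assms by (auto simp: abs_square_le_1)
    then show ?thesis using assms by auto
  qed
  have pp: "Pc a c ((sin t)\<^sup>2) \<noteq> 0" "a + sqrt (Pc a c ((sin t)\<^sup>2)) \<noteq> 0" if "0 \<le> c" "c \<le> 1" for c t
  proof -
    have "0 < Pc a c ((sin t)\<^sup>2)" using Pc_pos[of a c "(sin t)\<^sup>2"] that assms by (simp add: abs_square_le_1)
    moreover have "0 \<le> sqrt (Pc a c ((sin t)\<^sup>2))" using calculation by simp
    ultimately show "Pc a c ((sin t)\<^sup>2) \<noteq> 0" "a + sqrt (Pc a c ((sin t)\<^sup>2)) \<noteq> 0" using assms by linarith+
  qed
  have c: "continuous_on ({0..1} \<times> {-(pi/2)..pi/2}) (\<lambda>p. Gc a (fst p) (sin (snd p)))"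
    unfolding Gc_def
    by (intro continuous_intros Pc_cont S2_cont ne)
       (use assms pp in auto)
  then show ?thesis by (simp add: case_prod_beta)
qed

lemma Gc_cont_t:
  assumes "a \<ge> 3" "0 \<le> c" "c \<le> 1"
  shows "continuous_on {-(pi/2)..pi/2} (\<lambda>t. Gc a c (sin t))"
proof -
  have "continuous_on {-(pi/2)..pi/2} ((\<lambda>(c,t). Gc a c (sin t)) \<circ> (\<lambda>t. (c,t)))"
    by (rule continuous_on_compose[OF _ continuous_on_subset[OF Gc_cont[OF assms(1)]]])
       (use assms in \<open>auto intro!: continuous_intros\<close>)
  then show ?thesis by (simp add: o_def)
qed

definition LC :: "real \<Rightarrow> real \<Rightarrow> real" where
  "LC a c = integral {-(pi/2)..pi/2} (\<lambda>t. Gc a c (sin t))"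

lemma LC_cont: "a \<ge> 3 \<Longrightarrow> continuous_on {0..1} (LC a)"
  unfolding LC_def using integral_continuous_on_param[of "{0..1}" "-(pi/2)" "pi/2" "\<lambda>c t. Gc a c (sin t)"]
    Gc_cont[of a] by (simp add: cbox_interval)

lemma integral_pos_lemma:
  fixes f :: "real \<Rightarrow> real"
  assumes "continuous_on {l..r} f" "l < r" "\<And>x. x \<in> {l..r} \<Longrightarrow> 0 \<le> f x" "p \<in> {l..r}" "f p > 0"
  shows "integral {l..r} f > 0"
proof -
  have "0 \<le> integral {l..r} f"
    using assms by (intro Henstock_Kurzweil_Integration.integral_nonneg integrable_continuous_interval) auto
  moreover have "integral {l..r} f \<noteq> 0"
  proof
    assume "integral {l..r} f = 0"
    then have "\<forall>x\<in>cbox l r. f x = 0"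
      using integral_cbox_eq_0_iff[of l r f] assms by (auto simp: cbox_interval box_real)
    then show False using assms by (auto simp: cbox_interval)
  qed
  ultimately show ?thesis by simp
qed

lemma LC_pos0:
  assumes "a \<ge> 3" shows "LC a 0 > 0"
  unfolding LC_def
proof (rule integral_pos_lemma[where p="pi/2"])
  show "continuous_on {-(pi/2)..pi/2} (\<lambda>t. Gc a 0 (sin t))" using Gc_cont_t assms by auto
  have g: "Gc a 0 x = S2 a 0 * x\<^sup>2 * (1 / sqrt (Pc a 0 (x\<^sup>2)) + a / (sqrt (Pc a 0 (x\<^sup>2)) * (a + sqrt (Pc a 0 (x\<^sup>2)))))"
    if "x\<^sup>2 \<le> 1" for x using Gc_alt[of a 0 x] assms that by simp
  have sp: "a/2 \<le> sqrt (Pc a 0 (x\<^sup>2))" if "x\<^sup>2 \<le> 1" for x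
    using sqrtPc_bounds[of a 0 "x\<^sup>2"] assms that by auto
  have S: "S2 a 0 > 0" using assms by (simp add: S2_def)
  show "0 \<le> Gc a 0 (sin t)" for t
  proof -
    have "a/2 \<le> sqrt (Pc a 0 ((sin t)\<^sup>2))" using sp[of "sin t"] by (simp add: abs_square_le_1)
    then have "0 < sqrt (Pc a 0 ((sin t)\<^sup>2))" using assms by linarith
    then show ?thesis using g[of "sin t"] S assms by (simp add: abs_square_le_1)
  qed
  show "0 < Gc a 0 (sin (pi/2))"
  proof -
    have "a/2 \<le> sqrt (Pc a 0 1)" using sp[of 1] by simp
    then have "0 < sqrt (Pc a 0 1)" using assms by linarith
    then have "0 < 1 / sqrt (Pc a 0 1) + a / (sqrt (Pc a 0 1) * (a + sqrt (Pc a 0 1)))"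
      using assms by (intro add_pos_pos divide_pos_pos mult_pos_pos) auto
    then show ?thesis using g[of 1] S by simp
  qed
qed auto

lemma Gc_upper:
  assumes "a \<ge> 3" "0 \<le> c" "c \<le> 1" "x\<^sup>2 \<le> 1"
  shows "Gc a c x \<le> 1/a^3 - c/(6*a)"
proof -
  define u where "u = sqrt (Pc a c (x\<^sup>2))"
  have b: "a/2 \<le> u" "u \<le> a+1" using sqrtPc_bounds[of a c "x\<^sup>2"] assms by (auto simp: u_def)
  have S: "0 \<le> S2 a c" "S2 a c \<le> 1/(4*a\<^sup>2)" using S2_bounds assms by auto
  have "1/u \<le> 1/(a/2)" using b assms by (intro divide_left_mono) auto
  moreover have "a/(u*(a+u)) \<le> a/((a/2)*(a+a/2))" using b assms by (intro divide_left_mono mult_mono) auto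
  moreover have "a/((a/2)*(a+a/2)) \<le> 2/a" using assms by (simp add: field_simps)
  ultimately have phi: "1/u + a/(u*(a+u)) \<le> 4/a" by simp
  have phi0: "0 \<le> 1/u + a/(u*(a+u))" using b assms by auto
  have "S2 a c * x\<^sup>2 * (1/u + a/(u*(a+u))) \<le> (1/(4*a\<^sup>2)) * 1 * (4/a)"
    using S assms phi phi0 by (intro mult_mono) auto
  also have "\<dots> = 1/a^3" by (simp add: power2_eq_square power3_eq_cube)
  finally have T: "S2 a c * x\<^sup>2 * (1/u + a/(u*(a+u))) \<le> 1/a^3" .
  have "u*(a+u) \<le> (a+1)*(a+(a+1))" using b assms by (intro mult_mono add_mono) auto
  also have "\<dots> \<le> 6*a\<^sup>2"
  proof -
    have "a*3 \<le> a*a" using assms by (intro mult_left_mono) auto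
    moreover have "(a+1)*(a+(a+1)) = 2*(a*a) + 3*a + 1" "6*a\<^sup>2 = 6*(a*a)"
      by (simp_all add: power2_eq_square algebra_simps)
    ultimately show ?thesis using assms by linarith
  qed
  finally have "u*(a+u) \<le> 6*a\<^sup>2" .
  then have "a*c/(6*a\<^sup>2) \<le> a*c/(u*(a+u))" using b assms by (intro divide_left_mono) auto
  moreover have "a*c/(6*a\<^sup>2) = c/(6*a)" using assms by (simp add: power2_eq_square)
  ultimately have psi: "c/(6*a) \<le> a*c/(u*(a+u))" by simp
  show ?thesis using Gc_alt[OF assms] T psi unfolding u_def[symmetric] by simp
qed

lemma LC_neg:
  assumes "a \<ge> 3" "0 < c" "c \<le> 1" "6 < c * a\<^sup>2"
  shows "LC a c < 0"
proof -
  have "LC a c \<le> integral {-(pi/2)..pi/2} (\<lambda>t. 1/a^3 - c/(6*a))"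
    unfolding LC_def using assms
    by (intro integral_le integrable_continuous_interval Gc_cont_t Gc_upper)
       (auto simp: abs_square_le_1)
  also have "\<dots> = pi * (1/a^3 - c/(6*a))" by simp
  also have "\<dots> < 0"
  proof -
    have "1/a^3 < c/(6*a)" using assms by (simp add: field_simps power2_eq_square power3_eq_cube)
    then show ?thesis by (simp add: mult_pos_neg)
  qed
  finally show ?thesis .
qed

lemma LC_mono:
  assumes "a \<ge> 3" "0 \<le> c1" "c1 < c2" "c2 \<le> 1"
  shows "LC a c2 < LC a c1"
proof -
  have i1: "(\<lambda>t. Gc a c1 (sin t)) integrable_on {-(pi/2)..pi/2}"
    using assms by (intro integrable_continuous_interval Gc_cont_t) auto
  have i2: "(\<lambda>t. Gc a c2 (sin t)) integrable_on {-(pi/2)..pi/2}"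
    using assms by (intro integrable_continuous_interval Gc_cont_t) auto
  have "0 < integral {-(pi/2)..pi/2} (\<lambda>t. Gc a c1 (sin t) - Gc a c2 (sin t))"
  proof (rule integral_pos_lemma[where p=0])
    show "continuous_on {-(pi/2)..pi/2} (\<lambda>t. Gc a c1 (sin t) - Gc a c2 (sin t))"
      using assms by (intro continuous_on_diff Gc_cont_t) auto
    show "0 \<le> Gc a c1 (sin t) - Gc a c2 (sin t)" for t
      using Gc_mono[of a c1 c2 "sin t"] assms by (simp add: abs_square_le_1)
    show "0 < Gc a c1 (sin 0) - Gc a c2 (sin 0)"
      using Gc_mono[of a c1 c2 0] assms by simp
  qed auto
  then show ?thesis unfolding LC_def
    using Henstock_Kurzweil_Integration.integral_diff[OF i1 i2] by simp
qed

lemma LC_subst: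
  assumes "a \<ge> 3" "0 \<le> c" "c \<le> 1"
  shows "((\<lambda>x. (1 / sqrt (1 - x\<^sup>2)) * Gc a c x) has_integral LC a c) {-1..1}"
proof -
  have "((\<lambda>x. (1 / sqrt (1 - x\<^sup>2)) *\<^sub>R Gc a c (sin (arcsin x))) has_integral
        integral {arcsin (-1)..arcsin 1} (\<lambda>t. Gc a c (sin t))) {-1..1}"
  proof (rule has_integral_substitution_strong[of "{-1,1}" "-1" 1 arcsin "-(pi/2)" "pi/2"])
    show "arcsin ` {-1..1} \<subseteq> {-(pi/2)..pi/2}" using arcsin_bounded by auto
    show "continuous_on {-(pi/2)..pi/2} (\<lambda>t. Gc a c (sin t))" using Gc_cont_t assms by auto
    show "continuous_on {-1..1} arcsin" by (rule continuous_on_arcsin')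
    show "(arcsin has_real_derivative 1 / sqrt (1 - x\<^sup>2)) (at x within {-1..1})"
      if "x \<in> {-1..1} - {-1,1}" for x
    proof -
      have "-1 < x" "x < 1" using that by auto
      from DERIV_arcsin[OF this] show ?thesis
        by (simp add: divide_inverse has_field_derivative_at_within)
    qed
  qed auto
  then have "((\<lambda>x. (1 / sqrt (1 - x\<^sup>2)) *\<^sub>R Gc a c (sin (arcsin x))) has_integral LC a c) {-1..1}"
    unfolding LC_def by simp
  then show ?thesis
    by (rule has_integral_eq[rotated]) simp
qed

lemma L_eq:
  assumes "a \<ge> 3" "0 \<le> cos (2*\<theta>)" "cos (2*\<theta>) \<le> 1"
  shows "L_fun a \<theta> = LC a (cos (2*\<theta>))"
proof -
  define c where "c = cos (2*\<theta>)"
  have C: "(C_coef a \<theta>)\<^sup>2 = S2 a c"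
    unfolding C_coef_def S2_def c_def by (simp add: power_divide sin_squared_eq power_mult_distrib)
  have P: "P_poly a \<theta> x = Pc a c (x\<^sup>2)" for x
    unfolding P_poly_def Pc_def C c_def[symmetric] by (simp add: power2_eq_square power4_eq_xxxx)
  have "L_fun a \<theta> = integral {-1..1} (\<lambda>x. (1 / sqrt (1 - x\<^sup>2)) * Gc a c x)"
    unfolding L_fun_def
  proof (rule Henstock_Kurzweil_Integration.integral_cong)
    fix x :: real
    show "(2 * a * (C_coef a \<theta>)\<^sup>2 * x\<^sup>2 - a * cos (2 * \<theta>) + (C_coef a \<theta>)\<^sup>2 * x\<^sup>2 * sqrt (P_poly a \<theta> x)) /
          (sqrt ((1 - x\<^sup>2) * P_poly a \<theta> x) * (a + sqrt (P_poly a \<theta> x))) =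
          1 / sqrt (1 - x\<^sup>2) * Gc a c x"
      unfolding Gc_def C P c_def[symmetric] real_sqrt_mult by (simp add: mult.assoc)
  qed
  also have "\<dots> = LC a c" using LC_subst[of a c] assms c_def by (simp add: integral_unique)
  finally show ?thesis by (simp add: c_def)
qed



lemma theta_tilde_window:
  assumes a: "a \<ge> 3" and e: "0 < e" "e < pi/4" and big: "6 < sin (2*e) * a\<^sup>2"
  shows "pi/4 - e < theta_tilde a \<and> theta_tilde a < pi/4"
proof -
  define ce where "ce = sin (2*e)"
  have ce: "0 < ce" "ce < 1" unfolding ce_def
  proof -
    show "0 < sin (2*e)" using e by (intro sin_gt_zero) auto
    have "sin (2*e) < sin (pi/2)" using e by (intro sin_monotone_2pi) auto
    then show "sin (2*e) < 1" by simp
  qed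
  have cont: "continuous_on {0..ce} (LC a)"
    by (rule continuous_on_subset[OF LC_cont[OF a]]) (use ce in auto)
  have big': "6 < ce * a\<^sup>2" using big unfolding ce_def .
  have neg: "LC a ce < 0" by (rule LC_neg[OF a ce(1) less_imp_le[OF ce(2)] big'])
  have pos: "LC a 0 > 0" by (rule LC_pos0[OF a])
  obtain cs where cs: "0 \<le> cs" "cs \<le> ce" "LC a cs = 0"
    using IVT2'[of "LC a" ce 0 0, OF less_imp_le[OF neg] less_imp_le[OF pos] less_imp_le[OF ce(1)] cont] by blast
  have cs0: "0 < cs" "cs < ce" using cs neg pos by (auto simp: le_less)
  define ts where "ts = arccos cs / 2"
  have ac: "arccos cs < pi/2" using arccos_less_arccos[of 0 cs] cs0 ce by simp
  have ac0: "0 < arccos cs" using arccos_lt_bounded[of cs] cs0 ce by simp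
  have ace: "arccos ce < arccos cs" using arccos_less_arccos[of cs ce] cs0 ce by simp
  have "arccos ce = pi/2 - 2*e"
  proof -
    have "ce = cos (pi/2 - 2*e)" unfolding ce_def by (simp add: cos_diff)
    then show ?thesis using e by (simp add: arccos_cos)
  qed
  with ace have lower: "pi/4 - e < ts" unfolding ts_def by simp
  have ts: "0 < ts" "ts < pi/4" using ac ac0 unfolding ts_def by auto
  have cts: "cos (2*ts) = cs" unfolding ts_def using cs0 ce by simp
  have Lts: "L_fun a ts = 0" using L_eq[of a ts] a cts cs0 ce cs(3) by simp
  have tp: "theta_plus a = pi/2" using a by (simp add: theta_plus_def)
  have uniq: "t = ts" if t: "t \<in> {0<..<theta_plus a} \<inter> {0<..<pi/4} \<and> L_fun a t = 0" for t
  proof -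
    have t0: "0 < t" "t < pi/4" "L_fun a t = 0" using t by auto
    have c0: "0 < cos (2*t)" using t0 by (intro cos_gt_zero) auto
    have c1: "cos (2*t) < 1"
    proof -
      have "cos (2*t) < cos 0" using t0 by (intro cos_monotone_0_pi) auto
      then show ?thesis by simp
    qed
    have LCt: "LC a (cos (2*t)) = 0" using L_eq[of a t] a c0 c1 t0(3) by simp
    have "cos (2*t) = cs"
    proof (rule ccontr)
      assume "cos (2*t) \<noteq> cs"
      then consider "cos (2*t) < cs" | "cs < cos (2*t)" by linarith
      then show False
      proof cases
        case 1 then show ?thesis using LC_mono[of a "cos (2*t)" cs] a c0 cs0 ce LCt cs(3) by simp
      next
        case 2 then show ?thesis using LC_mono[of a cs "cos (2*t)"] a c1 cs0 ce LCt cs(3) by simp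
      qed
    qed
    then have "cos (2*t) = cos (2*ts)" using cts by simp
    then have "2*t = 2*ts" using cos_inj_pi[of "2*t" "2*ts"] t0 ts by auto
    then show ?thesis by simp
  qed
  have "theta_tilde a = ts"
    unfolding theta_tilde_def
  proof (rule the_equality)
    show "ts \<in> {0<..<theta_plus a} \<inter> {0<..<pi/4} \<and> L_fun a ts = 0"
      using ts tp Lts by auto
  qed (use uniq in blast)
  then show ?thesis using lower ts by simp
qed

theorem lemma4p6:
  shows "(theta_tilde \<longlongrightarrow> pi / 4) at_top"
proof (rule tendstoI)
  fix r :: real assume r: "0 < r"
  define e where "e = min (r/2) (pi/8)"
  have e: "0 < e" "e < pi/4" "e < r" using r pi_gt_zero unfolding e_def by (auto simp: min_def)
  define ce where "ce = sin (2*e)"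
  have ce: "0 < ce" unfolding ce_def using e by (intro sin_gt_zero) auto
  have "eventually (\<lambda>a. a \<ge> max 3 (7/ce)) at_top" by (rule eventually_ge_at_top)
  then show "eventually (\<lambda>a. dist (theta_tilde a) (pi/4) < r) at_top"
  proof (rule eventually_mono)
    fix a :: real assume "max 3 (7/ce) \<le> a"
    then have a: "3 \<le> a" "7/ce \<le> a" by auto
    then have "7 \<le> ce * a" using ce by (simp add: divide_le_eq mult.commute)
    then have "7 * 3 \<le> (ce * a) * a" using a by (intro mult_mono) auto
    then have big: "6 < sin (2*e) * a\<^sup>2" unfolding ce_def by (simp add: power2_eq_square mult.assoc)
    from theta_tilde_window[OF a(1) e(1,2) big] e
    show "dist (theta_tilde a) (pi/4) < r" by (simp add: dist_real_def abs_if)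
  qed
qed

end
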